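(* Let $\Omega\subset\mathbb{R}^N$ be a bounded domain of class $C^{2,\beta}$, $p\ge1$, $\lambda>0$, and let $(\alpha_\lambda,\psi_\lambda)$ be a solution of $(\mathbf{P}_\lambda)$ with $\alpha_\lambda<0$. Let $\Omega_+=\{x\in\Omega:\alpha_\lambda+\lambda\psi_\lambda>0\}$, $\Omega_-=\{x\in\Omega:\alpha_\lambda+\lambda\psi_\lambda<0\}$ and $E_\lambda=\frac12\int_\Omega|\nabla\psi_\lambda|^2$. Then $$2E_\lambda=\int_{\Omega_+}|\nabla\psi_\lambda|^2-\frac{\alpha_\lambda}{\lambda},\qquad\int_{\Omega_-}|\nabla\psi_\lambda|^2=-\frac{\alpha_\lambda}\lambda,\qquad\int_{\{\alpha_\lambda+\lambda\psi_\lambda=0\}}|\nabla\psi_\lambda|^2=0.$$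
   Context: Problem $(\mathbf{P}_\lambda)$: find $(\alpha,\psi)\in\mathbb{R}\times C^{2,\beta}(\overline\Omega)$ with $-\Delta\psi=[\alpha+\lambda\psi]_+^p$ in $\Omega$, $\psi=0$ on $\partial\Omega$, $\int_\Omega[\alpha+\lambda\psi]_+^p=1$, where $[t]_+=\max\{t,0\}$. *)

theory Defs
  imports "HOL-Analysis.Analysis"
begin

definition partial :: "('a::euclidean_space \<Rightarrow> real) \<Rightarrow> 'a \<Rightarrow> 'a \<Rightarrow> real" where
  "partial f b x = frechet_derivative f (at x) b"

definition grad :: "('a::euclidean_space \<Rightarrow> real) \<Rightarrow> 'a \<Rightarrow> 'a" where
  "grad f x = (\<Sum>b\<in>Basis. partial f b x *\<^sub>R b)"

definition laplacian :: "('a::euclidean_space \<Rightarrow> real) \<Rightarrow> 'a \<Rightarrow> real" where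
  "laplacian f x = (\<Sum>b\<in>Basis. partial (partial f b) b x)"

definition holder_on :: "real \<Rightarrow> 'a::metric_space set \<Rightarrow> ('a \<Rightarrow> real) \<Rightarrow> bool" where
  "holder_on \<beta> S g \<longleftrightarrow> (\<exists>C. \<forall>x\<in>S. \<forall>y\<in>S. \<bar>g x - g y\<bar> \<le> C * dist x y powr \<beta>)"

definition C2beta_on :: "real \<Rightarrow> 'a::euclidean_space set \<Rightarrow> ('a \<Rightarrow> real) \<Rightarrow> bool" where
  "C2beta_on \<beta> S f \<longleftrightarrow>
     (\<forall>x\<in>S. f differentiable (at x)) \<and>
     (\<forall>b\<in>Basis. \<forall>x\<in>S. partial f b differentiable (at x)) \<and>
     (\<forall>b\<in>Basis. \<forall>c\<in>Basis. holder_on \<beta> S (partial (partial f b) c))"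

(* f \<in> C^{2,beta}(closure \<Omega>): C^{2,beta} in \<Omega>, with f and its first derivatives
   extending continuously to the closure (f itself is required continuous on the closure). *)
definition C2beta_closure :: "real \<Rightarrow> 'a::euclidean_space set \<Rightarrow> ('a \<Rightarrow> real) \<Rightarrow> bool" where
  "C2beta_closure \<beta> \<Omega> f \<longleftrightarrow>
     C2beta_on \<beta> \<Omega> f \<and> continuous_on (closure \<Omega>) f \<and>
     (\<forall>b\<in>Basis. uniformly_continuous_on \<Omega> (partial f b))"

definition C2beta_domain :: "real \<Rightarrow> 'a::euclidean_space set \<Rightarrow> bool" where
  "C2beta_domain \<beta> \<Omega> \<longleftrightarrow>
     open \<Omega> \<and> connected \<Omega> \<and> \<Omega> \<noteq> {} \<and> bounded \<Omega> \<and>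
     (\<forall>x0\<in>frontier \<Omega>. \<exists>r>0. \<exists>\<rho>.
        C2beta_on \<beta> (ball x0 r) \<rho> \<and>
        (\<forall>x\<in>ball x0 r. grad \<rho> x \<noteq> 0) \<and>
        \<Omega> \<inter> ball x0 r = {x\<in>ball x0 r. \<rho> x < 0})"

definition solves_P :: "real \<Rightarrow> real \<Rightarrow> 'a::euclidean_space set \<Rightarrow> real \<Rightarrow> real \<Rightarrow> ('a \<Rightarrow> real) \<Rightarrow> bool" where
  "solves_P \<beta> p \<Omega> lam \<alpha> \<psi> \<longleftrightarrow>
     C2beta_closure \<beta> \<Omega> \<psi> \<and>
     (\<forall>x\<in>\<Omega>. - laplacian \<psi> x = (max (\<alpha> + lam * \<psi> x) 0) powr p) \<and>
     (\<forall>x\<in>frontier \<Omega>. \<psi> x = 0) \<and>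
     integral \<Omega> (\<lambda>x. (max (\<alpha> + lam * \<psi> x) 0) powr p) = 1"

end

theory Submission
  imports Defs
begin


lemma translate_integral:
  fixes g :: "'a::euclidean_space \<Rightarrow> real"
  assumes "\<And>x. x \<notin> cbox a b \<Longrightarrow> g x = 0" "continuous_on UNIV g"
  shows "((\<lambda>x. g (x + c)) has_integral integral UNIV g) UNIV"
proof -
  have gi: "(g has_integral integral (cbox a b) g) (cbox a b)"
    using assms(2) by (intro integrable_integral integrable_continuous continuous_on_subset[OF assms(2)]) simp
  have gU: "integral UNIV g = integral (cbox a b) g"
    using has_integral_on_superset[OF gi, of UNIV] assms(1) by (simp add: integral_unique)
  have "((\<lambda>x. g (1 *\<^sub>R x + c)) has_integral (1 / \<bar>1::real\<bar> ^ DIM('a)) *\<^sub>R integral (cbox a b) g)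
      ((\<lambda>x. (1 / 1) *\<^sub>R x + - ((1 / 1) *\<^sub>R c)) ` cbox a b)"
    by (rule has_integral_affinity[OF gi]) simp
  then have h: "((\<lambda>x. g (x + c)) has_integral integral UNIV g) ((\<lambda>x. x - c) ` cbox a b)"
    using gU by simp
  show ?thesis
  proof (rule has_integral_on_superset[OF h])
    fix x assume "x \<notin> (\<lambda>x. x - c) ` cbox a b"
    then have "x + c \<notin> cbox a b" by (metis add_diff_cancel image_eqI)
    then show "g (x + c) = 0" using assms(1) by blast
  qed simp
qed

lemma ibp_zero:
  fixes F :: "'a::euclidean_space \<Rightarrow> real" and b :: 'a
  assumes der: "\<And>x. (F has_derivative F' x) (at x)"
   and cont: "continuous_on UNIV (\<lambda>x. F' x b)"
   and S: "compact S" "\<And>x. x \<notin> S \<Longrightarrow> F x = 0" "\<And>x. x \<notin> S \<Longrightarrow> F' x b = 0"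
  shows "((\<lambda>x. F' x b) has_integral 0) UNIV"
proof -
  define G where "G x = F' x b" for x
  obtain R where R: "S \<subseteq> cball 0 R" "R \<ge> 0"
    proof -
    obtain R0 where "\<forall>x\<in>S. norm x \<le> R0" using compact_imp_bounded[OF S(1)] bounded_iff by blast
    then have "S \<subseteq> cball 0 (max R0 0)" by (force simp: mem_cball_0)
    then show ?thesis using that[of "max R0 0"] by simp
  qed
  define S1 where "S1 = cball (0::'a) (R + norm b)"
  have "compact S1" unfolding S1_def by simp
  obtain a where a: "S1 \<subseteq> cbox (-a) a" using bounded_subset_cbox_symmetric[OF compact_imp_bounded[OF \<open>compact S1\<close>]] by blast
  have Ra: "S \<subseteq> cbox (-a) a" proof -
    have "cball 0 R \<subseteq> S1" unfolding S1_def by (rule subset_cball) simp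
    then show ?thesis using R a by blast
  qed
  have contF: "continuous_on UNIV F"
    using der by (intro continuous_at_imp_continuous_on ballI has_derivative_continuous) blast
  have uc: "uniformly_continuous_on S1 G"
    unfolding G_def by (rule compact_uniformly_continuous[OF continuous_on_subset[OF cont] \<open>compact S1\<close>]) simp
  have Gz: "G x = 0" if "x \<notin> S" for x using S(3) that unfolding G_def by auto
  have Fz: "F x = 0" if "x \<notin> cbox (-a) a" for x using S(2) that Ra by auto
  have Gz2: "G x = 0" if "x \<notin> cbox (-a) a" for x using Gz that Ra by auto
  have Gint: "(G has_integral integral UNIV G) UNIV"
  proof -
    have "(G has_integral integral (cbox (-a) a) G) (cbox (-a) a)"
      unfolding G_def by (intro integrable_integral integrable_continuous continuous_on_subset[OF cont]) simp
    from has_integral_on_superset[OF this, of UNIV] Gz2 have h: "(G has_integral integral (cbox (-a) a) G) UNIV" by blast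
    then have "integral UNIV G = integral (cbox (-a) a) G" by (rule integral_unique)
    with h show ?thesis by simp
  qed
  define DQ where "DQ t x = (F (x + t *\<^sub>R b) - F x) / t" for t x
  have DQint: "(DQ t has_integral 0) UNIV" if "t \<noteq> 0" for t
  proof -
    have "((\<lambda>x. F (x + t *\<^sub>R b)) has_integral integral UNIV F) UNIV"
      by (rule translate_integral[OF Fz contF])
    moreover have "(F has_integral integral UNIV F) UNIV"
      using translate_integral[OF Fz contF, where c=0] by simp
    ultimately have "((\<lambda>x. F (x + t *\<^sub>R b) - F x) has_integral (integral UNIV F - integral UNIV F)) UNIV"
      by (rule has_integral_diff)
    then have "((\<lambda>x. F (x + t *\<^sub>R b) - F x) has_integral 0) UNIV" by simp
    from has_integral_mult_right[OF this, of "1/t"] show ?thesis unfolding DQ_def by simp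
  qed
  have mvt: "\<exists>s. 0 < s \<and> s < t \<and> DQ t x = G (x + s *\<^sub>R b)" if "t > 0" for t x
  proof -
    have "\<exists>z>0. z < t \<and> F (x + t *\<^sub>R b) - F (x + 0 *\<^sub>R b) = (t - 0) * G (x + z *\<^sub>R b)"
    proof (rule MVT2[OF that])
      fix s :: real
      have d1: "((\<lambda>s. x + s *\<^sub>R b) has_derivative (\<lambda>h. h *\<^sub>R b)) (at s)"
        by (auto intro!: derivative_eq_intros)
      have "((\<lambda>s. F (x + s *\<^sub>R b)) has_derivative (\<lambda>h. F' (x + s *\<^sub>R b) (h *\<^sub>R b))) (at s)"
        by (rule has_derivative_compose[OF d1 der])
      moreover have "(\<lambda>h. F' (x + s *\<^sub>R b) (h *\<^sub>R b)) = (*) (G (x + s *\<^sub>R b))"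
        using has_derivative_linear[OF der] unfolding G_def
        by (simp add: linear_cmul fun_eq_iff)
      ultimately show "((\<lambda>s. F (x + s *\<^sub>R b)) has_real_derivative G (x + s *\<^sub>R b)) (at s)"
        unfolding has_field_derivative_def by simp
    qed
    then show ?thesis unfolding DQ_def using that by auto
  qed
  have close: "\<exists>t>0. t \<le> 1 \<and> (\<forall>x. \<bar>DQ t x - G x\<bar> \<le> e)" if e0: "e > 0" for e
  proof -
    obtain d where d: "d > 0" "\<And>x y. x \<in> S1 \<Longrightarrow> y \<in> S1 \<Longrightarrow> dist y x < d \<Longrightarrow> dist (G y) (G x) < e"
      using uc e0 unfolding uniformly_continuous_on_def by metis
    define t where "t = min 1 (d / (2 * (norm b + 1)))"
    have t: "t > 0" "t \<le> 1" "t * norm b < d"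
    proof -
      have nb: "0 < 2 * (norm b + 1)" by (simp add: add_nonneg_pos)
      have "0 < d / (2 * (norm b + 1))" by (rule divide_pos_pos[OF d(1) nb])
      then show "t > 0" "t \<le> 1" unfolding t_def by auto
      have "t * norm b \<le> (d / (2 * (norm b + 1))) * norm b" unfolding t_def
        by (intro mult_right_mono) auto
      also have "\<dots> = d * (norm b / (2 * (norm b + 1)))" by simp
      also have "\<dots> < d * 1"
      proof (rule mult_strict_left_mono)
        have p: "0 < 2*(norm b+1)" by (simp add: add_nonneg_pos)
        have "norm b < 2 * (norm b + 1)" by (simp add: algebra_simps add_nonneg_pos)
        then show "norm b / (2 * (norm b + 1)) < 1" using divide_less_eq_1_pos[OF p] by blast
      qed (use d in auto)
      finally show "t * norm b < d" by simp
    qed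
    have "\<bar>DQ t x - G x\<bar> \<le> e" for x
    proof -
      obtain s where s: "0 < s" "s < t" "DQ t x = G (x + s *\<^sub>R b)" using mvt[OF t(1)] by blast
      have ns: "norm (s *\<^sub>R b) \<le> t * norm b" using s by (simp add: mult_right_mono)
      show ?thesis
      proof (cases "x \<in> S \<or> x + s *\<^sub>R b \<in> S")
        case True
        have "t * norm b \<le> 1 * norm b" using t by (intro mult_right_mono) auto
        then have n1: "norm (s *\<^sub>R b) \<le> norm b" using ns by linarith
        have "x \<in> S1 \<and> x + s *\<^sub>R b \<in> S1"
        proof -
          have "norm x \<le> R \<or> norm (x + s *\<^sub>R b) \<le> R" using True R by auto
          moreover have "norm (x + s *\<^sub>R b) \<le> norm x + norm (s *\<^sub>R b)" by (rule norm_triangle_ineq)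
          moreover have "norm x \<le> norm (x + s *\<^sub>R b) + norm (s *\<^sub>R b)"
            using norm_triangle_ineq[of "x + s *\<^sub>R b" "- (s *\<^sub>R b)"] by simp
          ultimately have "norm x \<le> R + norm b" "norm (x + s *\<^sub>R b) \<le> R + norm b" using n1 by linarith+
          then show ?thesis unfolding S1_def mem_cball_0 by blast
        qed
        then have "dist (G (x + s *\<^sub>R b)) (G x) < e"
          using d(2)[of x "x + s *\<^sub>R b"] ns t by (auto simp: dist_norm)
        then show ?thesis using s by (simp add: dist_real_def)
      next
        case False
        then show ?thesis using Gz s e0 by auto
      qed
    qed
    then show ?thesis using t by blast
  qed
  have bound: "\<bar>integral UNIV G\<bar> \<le> e * Henstock_Kurzweil_Integration.content (cbox (-a) a)" if e0: "e > 0" for e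
  proof -
    obtain t where t: "t > 0" "t \<le> 1" "\<And>x. \<bar>DQ t x - G x\<bar> \<le> e" using close[OF e0] by blast
    have h1: "((\<lambda>x. DQ t x - G x) has_integral (- integral UNIV G)) UNIV"
      using has_integral_diff[OF DQint Gint] t by simp
    have h2: "DQ t x - G x = 0" if "x \<notin> cbox (-a) a" for x
    proof -
      have "x \<notin> S" using that Ra by auto
      moreover have "x + t *\<^sub>R b \<notin> S"
      proof
        assume "x + t *\<^sub>R b \<in> S"
        then have "x + t *\<^sub>R b \<in> cball 0 R" using R by auto
        then have "norm x \<le> R + norm b" using norm_triangle_ineq[of "x + t *\<^sub>R b" "- (t *\<^sub>R b)"] t
          proof -
            have "t * norm b \<le> 1 * norm b" using t by (intro mult_right_mono) auto
            moreover have "norm (x + t *\<^sub>R b) \<le> R" using \<open>x + t *\<^sub>R b \<in> cball 0 R\<close> by simp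
            moreover have "norm x \<le> norm (x + t *\<^sub>R b) + norm (t *\<^sub>R b)"
              using norm_triangle_ineq[of "x + t *\<^sub>R b" "- (t *\<^sub>R b)"] by simp
            moreover have "norm (t *\<^sub>R b) = t * norm b" using t by simp
            ultimately show ?thesis by linarith
          qed
        then have "x \<in> S1" unfolding S1_def mem_cball_0 .
        then show False using that a by blast
      qed
      ultimately show ?thesis unfolding DQ_def using S(2) Gz by simp
    qed
    have "(\<lambda>x. if x \<in> cbox (-a) a then DQ t x - G x else 0) = (\<lambda>x. DQ t x - G x)"
      using h2 by auto
    with h1 have "((\<lambda>x. if x \<in> cbox (-a) a then DQ t x - G x else 0) has_integral (- integral UNIV G)) UNIV"
      by simp
    then have "((\<lambda>x. DQ t x - G x) has_integral (- integral UNIV G)) (cbox (-a) a)"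
      by (rule has_integral_restrict_UNIV[THEN iffD1])
    from has_integral_bound[OF _ this, of e] t e0 show ?thesis by simp
  qed
  have "integral UNIV G = 0"
  proof (rule ccontr)
    assume ne: "integral UNIV G \<noteq> 0"
    define V where "V = Henstock_Kurzweil_Integration.content (cbox (-a) a) + 1"
    have c0: "Henstock_Kurzweil_Integration.content (cbox (-a) a) \<ge> 0" by simp
    have V: "V > 0" unfolding V_def using c0 by linarith
    have "\<bar>integral UNIV G\<bar> \<le> (\<bar>integral UNIV G\<bar> / (2*V)) * Henstock_Kurzweil_Integration.content (cbox (-a) a)"
      by (rule bound) (use ne V in simp)
    also have "\<dots> < \<bar>integral UNIV G\<bar>"
    proof -
      have p: "0 < 2*V" using V by simp
      have "Henstock_Kurzweil_Integration.content (cbox (-a) a) < 2*V" proof -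
        have "2*V = 2 * Henstock_Kurzweil_Integration.content (cbox (-a) a) + 2" by (simp add: V_def algebra_simps)
        then show ?thesis using c0 by linarith
      qed
      then have "Henstock_Kurzweil_Integration.content (cbox (-a) a) / (2*V) < 1" using divide_less_eq_1_pos[OF p] by blast
      then have "\<bar>integral UNIV G\<bar> * (Henstock_Kurzweil_Integration.content (cbox (-a) a) / (2*V)) < \<bar>integral UNIV G\<bar> * 1"
        using ne by (intro mult_strict_left_mono) auto
      then show ?thesis by simp
    qed
    finally show False by simp
  qed
  then show ?thesis using Gint unfolding G_def by simp
qed



lemma pos_sq_deriv: "((\<lambda>t. (max t 0)^2) has_real_derivative 2 * max t 0) (at t)"
proof (cases "t = 0")
  case True
  have "((\<lambda>y. ((max y 0)^2 - (max 0 0)^2) / (y - 0)) \<longlongrightarrow> 0) (at (0::real))"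
  proof (rule Lim_null_comparison)
    show "\<forall>\<^sub>F y in at 0. norm (((max y 0)^2 - (max 0 0)^2) / (y - 0)) \<le> \<bar>y\<bar>"
      by (rule always_eventually) (auto simp: max_def power2_eq_square abs_mult)
    show "((\<lambda>y::real. \<bar>y\<bar>) \<longlongrightarrow> 0) (at 0)"
      using tendsto_rabs[OF tendsto_ident_at[of "0::real" UNIV]] by simp
  qed
  then show ?thesis using True by (simp add: has_field_derivative_iff)
next
  case False
  show ?thesis
  proof (cases "t > 0")
    case True
    have "((\<lambda>t. t^2) has_real_derivative 2 * t) (at t)"
      by (auto intro!: derivative_eq_intros)
    from has_field_derivative_transform_within_open[OF this, of "{0<..}"] True
    show ?thesis by auto
  next
    case f2: False
    with False have t: "t < 0" by simp
    have "((\<lambda>t. 0) has_real_derivative 0) (at t)" by simp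
    from has_field_derivative_transform_within_open[OF this, of "{..<0}"] t
    show ?thesis by auto
  qed
qed

lemma grad_inner: "b \<in> Basis \<Longrightarrow> grad g x \<bullet> b = partial g b x"
  unfolding grad_def by (simp add: inner_sum_left inner_Basis if_distrib sum.delta cong: if_cong)

lemma norm_grad_sq: "(norm (grad g x))^2 = (\<Sum>b\<in>Basis. (partial g b x)^2)"
proof -
  have "(norm (grad g x))^2 = grad g x \<bullet> grad g x" by (rule power2_norm_eq_inner)
  also have "\<dots> = (\<Sum>b\<in>Basis. (grad g x \<bullet> b) * (grad g x \<bullet> b))" by (rule euclidean_inner)
  also have "\<dots> = (\<Sum>b\<in>Basis. (partial g b x)^2)"
    by (rule sum.cong) (simp_all add: grad_inner power2_eq_square)
  finally show ?thesis .
qed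

lemma frechet_grad:
  assumes "g differentiable (at x)"
  shows "frechet_derivative g (at x) h = grad g x \<bullet> h"
proof -
  have lin: "linear (frechet_derivative g (at x))"
    using assms frechet_derivative_works has_derivative_linear by blast
  have "frechet_derivative g (at x) h = frechet_derivative g (at x) (\<Sum>b\<in>Basis. (h \<bullet> b) *\<^sub>R b)"
    by (simp add: euclidean_representation)
  also have "\<dots> = (\<Sum>b\<in>Basis. (h \<bullet> b) * partial g b x)"
    using lin by (simp add: linear_sum linear_cmul partial_def)
  also have "\<dots> = (\<Sum>b\<in>Basis. (grad g x \<bullet> b) * (h \<bullet> b))"
    by (rule sum.cong) (simp_all add: grad_inner)
  also have "\<dots> = grad g x \<bullet> h" by (rule euclidean_inner[symmetric])
  finally show ?thesis .
qed

lemma cont_cut: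
  assumes "continuous_on S h" "\<And>x. x \<in> S \<Longrightarrow> x \<notin> T \<Longrightarrow> h x = 0" "closed T" "T \<subseteq> S" "open S"
  shows "continuous_on UNIV (\<lambda>x. if x \<in> S then h x else 0)"
proof -
  have c1: "continuous_on S (\<lambda>x. if x \<in> S then h x else 0)"
    using assms(1) by (rule continuous_on_eq) simp
  have c2: "continuous_on (- T) (\<lambda>x. if x \<in> S then h x else 0)"
  proof (rule continuous_on_eq[OF continuous_on_const[of _ 0]])
    fix x assume "x \<in> - T" then show "0 = (if x \<in> S then h x else 0)" using assms(2) by auto
  qed
  have o: "open (- T)" using assms(3) by (simp add: open_Compl)
  have e: "S \<union> - T = UNIV" using assms(4) by blast
  from continuous_on_open_Un[OF assms(5) o c1 c2] e show ?thesis by simp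
qed

lemma int_cut:
  fixes g :: "'a::euclidean_space \<Rightarrow> real"
  assumes "continuous_on UNIV g" "\<And>x. x \<notin> T \<Longrightarrow> g x = 0" "compact T"
  shows "g integrable_on UNIV"
proof -
  obtain a where a: "T \<subseteq> cbox (-a) a"
    using bounded_subset_cbox_symmetric[OF compact_imp_bounded[OF assms(3)]] by blast
  have "(g has_integral integral (cbox (-a) a) g) (cbox (-a) a)"
    by (intro integrable_integral integrable_continuous continuous_on_subset[OF assms(1)]) simp
  moreover have "\<And>x. x \<notin> cbox (-a) a \<Longrightarrow> g x = 0" using assms(2) a by blast
  ultimately have "(g has_integral integral (cbox (-a) a) g) UNIV"
    using has_integral_on_superset[OF _ _ subset_UNIV] by blast
  then show ?thesis unfolding integrable_on_def by blast
qed

lemma zero_integral_nonneg: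
  fixes g :: "'a::euclidean_space \<Rightarrow> real"
  assumes "open S" "continuous_on S g" "\<And>x. x \<in> S \<Longrightarrow> 0 \<le> g x" "(g has_integral 0) S" "x \<in> S"
  shows "g x = 0"
proof -
  obtain a b where ab: "cbox a b \<subseteq> S" "x \<in> box a b"
    using open_contains_cbox[OF assms(1,5)] by blast
  have gi: "g integrable_on S" using assms(4) by blast
  have gi2: "g integrable_on cbox a b" using integrable_on_subcbox[OF gi ab(1)] .
  have i1: "integral (cbox a b) g \<le> integral S g"
    by (rule integral_subset_le[OF ab(1) gi2 gi]) (use assms(3) in blast)
  have i2: "0 \<le> integral (cbox a b) g"
    by (rule integral_nonneg[OF gi2]) (use assms(3) ab(1) in blast)
  have i3: "integral S g = 0" using assms(4) by (rule integral_unique)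
  have "integral (cbox a b) g = 0" using i1 i2 i3 by linarith
  then have h0: "(g has_integral 0) (cbox a b)" using integrable_integral[OF gi2] by simp
  show ?thesis
  proof (rule has_integral_0_cbox_imp_0[OF continuous_on_subset[OF assms(2) ab(1)] _ h0])
    show "\<And>x. x \<in> box a b \<Longrightarrow> 0 \<le> g x" using assms(3) ab(1) box_subset_cbox by blast
    show "box a b \<noteq> {}" using ab(2) by blast
    show "x \<in> cbox a b" using ab(2) box_subset_cbox by blast
  qed
qed



locale psetting =
  fixes \<Omega> :: "'a::euclidean_space set" and \<psi> :: "'a \<Rightarrow> real" and f :: "'a \<Rightarrow> real"
  assumes op: "open \<Omega>"
  and bdd: "bounded \<Omega>"
  and dpsi: "\<And>x. x \<in> \<Omega> \<Longrightarrow> \<psi> differentiable (at x)"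
  and dpart: "\<And>b x. b \<in> Basis \<Longrightarrow> x \<in> \<Omega> \<Longrightarrow> partial \<psi> b differentiable (at x)"
  and c2: "\<And>b. b \<in> Basis \<Longrightarrow> continuous_on \<Omega> (partial (partial \<psi> b) b)"
  and contcl: "continuous_on (closure \<Omega>) \<psi>"
  and bc: "\<And>x. x \<in> frontier \<Omega> \<Longrightarrow> \<psi> x = 0"
  and lap: "\<And>x. x \<in> \<Omega> \<Longrightarrow> - laplacian \<psi> x = f x"
begin

lemma cont_psi: "continuous_on \<Omega> \<psi>"
  using contcl closure_subset by (rule continuous_on_subset)

lemma cont_part: "b \<in> Basis \<Longrightarrow> continuous_on \<Omega> (partial \<psi> b)"
  by (intro continuous_at_imp_continuous_on ballI differentiable_imp_continuous_within dpart)

lemma cont_gradsq: "continuous_on \<Omega> (\<lambda>x. (norm (grad \<psi> x))^2)"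
proof -
  have "continuous_on \<Omega> (\<lambda>x. \<Sum>b\<in>Basis. (partial \<psi> b x)^2)"
    by (intro continuous_intros cont_part)
  then show ?thesis by (simp add: norm_grad_sq)
qed

lemma suppT:
  assumes "\<eta> > 0"
  shows "compact {x \<in> closure \<Omega>. \<eta> \<le> \<bar>\<psi> x\<bar>}" "{x \<in> closure \<Omega>. \<eta> \<le> \<bar>\<psi> x\<bar>} \<subseteq> \<Omega>"
proof -
  have ca: "continuous_on (closure \<Omega>) (\<lambda>x. \<bar>\<psi> x\<bar>)"
    using contcl by (intro continuous_intros)
  have eq: "{x \<in> closure \<Omega>. \<eta> \<le> \<bar>\<psi> x\<bar>} = closure \<Omega> \<inter> (\<lambda>x. \<bar>\<psi> x\<bar>) -` {\<eta>..}" by auto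
  have "closed {x \<in> closure \<Omega>. \<eta> \<le> \<bar>\<psi> x\<bar>}"
    unfolding eq by (rule continuous_closed_preimage[OF ca]) auto
  moreover have "bounded {x \<in> closure \<Omega>. \<eta> \<le> \<bar>\<psi> x\<bar>}"
    using bounded_closure[OF bdd] by (rule bounded_subset) auto
  ultimately show "compact {x \<in> closure \<Omega>. \<eta> \<le> \<bar>\<psi> x\<bar>}" by (simp add: compact_eq_bounded_closed)
  show "{x \<in> closure \<Omega>. \<eta> \<le> \<bar>\<psi> x\<bar>} \<subseteq> \<Omega>"
  proof
    fix x assume x: "x \<in> {x \<in> closure \<Omega>. \<eta> \<le> \<bar>\<psi> x\<bar>}"
    show "x \<in> \<Omega>"
    proof (rule ccontr)
      assume "x \<notin> \<Omega>"
      then have "x \<in> frontier \<Omega>" using x closure_Un_frontier by blast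
      then show False using bc x assms by force
    qed
  qed
qed

lemma weak:
  fixes K K' :: "real \<Rightarrow> real" and \<eta> :: real
  assumes Kd: "\<And>s. (K has_real_derivative K' s) (at s)" and Kc: "continuous_on UNIV K'"
   and eta: "\<eta> > 0" and K0: "\<And>s. \<bar>s\<bar> \<le> \<eta> \<Longrightarrow> K s = 0" and K'0: "\<And>s. \<bar>s\<bar> \<le> \<eta> \<Longrightarrow> K' s = 0"
  shows "(\<lambda>x. K' (\<psi> x) * (norm (grad \<psi> x))^2) integrable_on \<Omega>"
    "(\<lambda>x. f x * K (\<psi> x)) integrable_on \<Omega>"
    "integral \<Omega> (\<lambda>x. K' (\<psi> x) * (norm (grad \<psi> x))^2) = integral \<Omega> (\<lambda>x. f x * K (\<psi> x))"
proof -
  define T where "T = {x \<in> closure \<Omega>. \<eta> \<le> \<bar>\<psi> x\<bar>}"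
  have Tc: "compact T" and TO: "T \<subseteq> \<Omega>" using suppT[OF eta] unfolding T_def by auto
  have Tcl: "closed T" using Tc compact_imp_closed by blast
  have Kz: "K (\<psi> x) = 0" "K' (\<psi> x) = 0" if "x \<in> \<Omega>" "x \<notin> T" for x
  proof -
    have "\<bar>\<psi> x\<bar> \<le> \<eta>" using that closure_subset unfolding T_def by fastforce
    then show "K (\<psi> x) = 0" "K' (\<psi> x) = 0" using K0 K'0 by auto
  qed
  have Kcont: "continuous_on UNIV K"
    using Kd by (intro continuous_at_imp_continuous_on ballI DERIV_isCont) blast
  have cK: "continuous_on \<Omega> (\<lambda>x. K (\<psi> x))"
    by (rule continuous_on_compose2[OF Kcont cont_psi]) simp
  have cK': "continuous_on \<Omega> (\<lambda>x. K' (\<psi> x))"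
    by (rule continuous_on_compose2[OF Kc cont_psi]) simp
  define cut :: "('a \<Rightarrow> real) \<Rightarrow> 'a \<Rightarrow> real" where "cut h x = (if x \<in> \<Omega> then h x else 0)" for h x
  define Q where "Q b x = K' (\<psi> x) * (partial \<psi> b x)^2" for b x
  define R where "R b x = K (\<psi> x) * partial (partial \<psi> b) b x" for b x
  have cQ: "continuous_on UNIV (cut (Q b))" if b: "b \<in> Basis" for b
    unfolding cut_def
  proof (rule cont_cut[OF _ _ Tcl TO op])
    show "continuous_on \<Omega> (Q b)" unfolding Q_def using cK' cont_part[OF b] by (intro continuous_intros)
    show "\<And>x. x \<in> \<Omega> \<Longrightarrow> x \<notin> T \<Longrightarrow> Q b x = 0" unfolding Q_def using Kz by simp
  qed
  have cR: "continuous_on UNIV (cut (R b))" if b: "b \<in> Basis" for b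
    unfolding cut_def
  proof (rule cont_cut[OF _ _ Tcl TO op])
    show "continuous_on \<Omega> (R b)" unfolding R_def using cK c2[OF b] by (intro continuous_intros)
    show "\<And>x. x \<in> \<Omega> \<Longrightarrow> x \<notin> T \<Longrightarrow> R b x = 0" unfolding R_def using Kz by simp
  qed
  have Qz: "cut (Q b) x = 0" if "x \<notin> T" for b x using Kz that unfolding cut_def Q_def by simp
  have Rz: "cut (R b) x = 0" if "x \<notin> T" for b x using Kz that unfolding cut_def R_def by simp
  have Gint: "((\<lambda>x. cut (R b) x + cut (Q b) x) has_integral 0) UNIV" if b: "b \<in> Basis" for b
  proof -
    define F where "F x = cut (\<lambda>y. K (\<psi> y) * partial \<psi> b y) x" for x
    define F' where "F' x = (if x \<in> \<Omega> then (\<lambda>h. K (\<psi> x) * frechet_derivative (partial \<psi> b) (at x) h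
        + K' (\<psi> x) * frechet_derivative \<psi> (at x) h * partial \<psi> b x) else (\<lambda>h. 0))" for x
    have der: "(F has_derivative F' x) (at x)" for x
    proof (cases "x \<in> \<Omega>")
      case True
      have d1: "(\<psi> has_derivative frechet_derivative \<psi> (at x)) (at x)"
        using dpsi[OF True] frechet_derivative_works by blast
      have d2: "(partial \<psi> b has_derivative frechet_derivative (partial \<psi> b) (at x)) (at x)"
        using dpart[OF b True] frechet_derivative_works by blast
      have dK: "(K has_derivative (*) (K' (\<psi> x))) (at (\<psi> x))"
        by (rule has_field_derivative_imp_has_derivative[OF Kd])
      have dKp: "((\<lambda>y. K (\<psi> y)) has_derivative (\<lambda>h. K' (\<psi> x) * frechet_derivative \<psi> (at x) h)) (at x)"
        using has_derivative_compose[OF d1 dK] .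
      have dp: "((\<lambda>y. K (\<psi> y) * partial \<psi> b y) has_derivative F' x) (at x)"
        using has_derivative_mult[OF dKp d2] True unfolding F'_def by simp
      show ?thesis
        by (rule has_derivative_transform_within_open[OF dp op True]) (simp add: F_def cut_def)
    next
      case False
      then have x: "x \<in> - T" using TO by blast
      have "((\<lambda>y. 0) has_derivative (\<lambda>h. 0)) (at x)" by simp
      then have "((\<lambda>y. 0) has_derivative F' x) (at x)" using False unfolding F'_def by simp
      then show ?thesis
      proof (rule has_derivative_transform_within_open[OF _ _ x])
        show "open (- T)" using Tcl by (simp add: open_Compl)
        fix y assume "y \<in> - T"
        then show "0 = F y" unfolding F_def cut_def using Kz by simp
      qed
    qed
    have Geq: "F' x b = cut (R b) x + cut (Q b) x" for x
      unfolding F'_def cut_def R_def Q_def by (simp add: partial_def power2_eq_square)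
    have "((\<lambda>x. F' x b) has_integral 0) UNIV"
    proof (rule ibp_zero[OF der _ Tc])
      show "continuous_on UNIV (\<lambda>x. F' x b)" unfolding Geq using cR[OF b] cQ[OF b] by (rule continuous_on_add)
      show "\<And>x. x \<notin> T \<Longrightarrow> F x = 0" unfolding F_def cut_def using Kz by simp
      show "\<And>x. x \<notin> T \<Longrightarrow> F' x b = 0" unfolding Geq using Qz Rz by simp
    qed
    then show ?thesis unfolding Geq .
  qed
  have Gsum: "((\<lambda>x. \<Sum>b\<in>Basis. cut (R b) x + cut (Q b) x) has_integral 0) UNIV"
    using has_integral_sum[OF finite_Basis Gint] by simp
  define P1 where "P1 = cut (\<lambda>y. K' (\<psi> y) * (norm (grad \<psi> y))^2)"
  define P2 where "P2 = cut (\<lambda>y. f y * K (\<psi> y))"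
  have P1eq: "P1 x = (\<Sum>b\<in>Basis. cut (Q b) x)" for x
    unfolding P1_def cut_def Q_def by (simp add: norm_grad_sq sum_distrib_left)
  have P1i: "P1 integrable_on UNIV"
    unfolding P1eq[abs_def]
    by (intro integrable_sum finite_Basis int_cut[OF cQ _ Tc] Qz) auto
  have sumeq: "(\<Sum>b\<in>Basis. cut (R b) x + cut (Q b) x) = P1 x - P2 x" for x
  proof (cases "x \<in> \<Omega>")
    case True
    have "(\<Sum>b\<in>Basis. cut (R b) x) = K (\<psi> x) * laplacian \<psi> x"
      using True unfolding cut_def R_def laplacian_def by (simp add: sum_distrib_left)
    also have "\<dots> = - (f x * K (\<psi> x))" proof -
      have "f x = - laplacian \<psi> x" using lap[OF True] by simp
      then show ?thesis by simp
    qed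
    finally have "(\<Sum>b\<in>Basis. cut (R b) x) = - P2 x" using True unfolding P2_def cut_def by simp
    then show ?thesis by (simp add: sum.distrib P1eq)
  next
    case False
    then show ?thesis unfolding P1_def P2_def cut_def by simp
  qed
  have P2eq: "P2 = (\<lambda>x. P1 x - (\<Sum>b\<in>Basis. cut (R b) x + cut (Q b) x))"
    using sumeq by (simp add: fun_eq_iff)
  have P2h: "(P2 has_integral (integral UNIV P1 - 0)) UNIV"
    unfolding P2eq using has_integral_diff[OF integrable_integral[OF P1i] Gsum] .
  have P1h: "(P1 has_integral integral UNIV P1) UNIV" using integrable_integral[OF P1i] .
  show "(\<lambda>x. K' (\<psi> x) * (norm (grad \<psi> x))^2) integrable_on \<Omega>"
    using P1i unfolding P1_def cut_def integrable_restrict_UNIV .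
  show "(\<lambda>x. f x * K (\<psi> x)) integrable_on \<Omega>"
  proof -
    have "P2 integrable_on UNIV" using P2h unfolding integrable_on_def by blast
    then show ?thesis unfolding P2_def cut_def integrable_restrict_UNIV .
  qed
  have "integral UNIV P2 = integral UNIV P1" using P2h integral_unique by force
  then show "integral \<Omega> (\<lambda>x. K' (\<psi> x) * (norm (grad \<psi> x))^2) = integral \<Omega> (\<lambda>x. f x * K (\<psi> x))"
    unfolding P1_def P2_def cut_def integral_restrict_UNIV by simp
qed

end


lemma dPs: "((\<lambda>s. (max (s - k) 0)^2) has_real_derivative 2 * max (s - k) 0) (at s)"
proof -
  have "((\<lambda>s. (max (s - k) 0)^2) has_real_derivative 2 * max (s - k) 0 * 1) (at s)"
    by (rule DERIV_chain2[OF pos_sq_deriv]) (auto intro!: derivative_eq_intros)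
  then show ?thesis by simp
qed

lemma dPn: "((\<lambda>s. (max (- s - k) 0)^2) has_real_derivative 2 * max (- s - k) 0 * (-1)) (at s)"
  by (rule DERIV_chain2[OF pos_sq_deriv]) (auto intro!: derivative_eq_intros)

lemma clamp_bd: "(e::real) \<ge> 0 \<Longrightarrow> 0 \<le> max t 0 - max (t - e) 0 \<and> max t 0 - max (t - e) 0 \<le> e"
  by (auto simp: max_def)

lemma ev_small:
  fixes c \<delta> :: real
  assumes "c > 0" "\<delta> > 0"
  shows "eventually (\<lambda>n. c / (real n + 4) \<le> \<delta>) sequentially"
proof -
  obtain N :: nat where N: "c / \<delta> < real N" using reals_Archimedean2 by blast
  show ?thesis unfolding eventually_sequentially
  proof (intro exI allI impI)
    fix n assume "N \<le> n"
    then have "c / \<delta> < real n + 4" using N by linarith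
    then have "c < \<delta> * (real n + 4)" using assms by (simp add: divide_less_eq mult.commute)
    then show "c / (real n + 4) \<le> \<delta>" by (simp add: divide_le_eq mult.commute)
  qed
qed

lemma eps_lim:
  fixes c :: real
  assumes "c > 0"
  shows "(\<lambda>n. c / (real n + 4)) \<longlonglongrightarrow> 0"
  unfolding lim_sequentially
proof (intro allI impI)
  fix r :: real assume r: "r > 0"
  from ev_small[OF assms, of "r/2"] r obtain N where N: "\<And>n. n \<ge> N \<Longrightarrow> c / (real n + 4) \<le> r/2"
    unfolding eventually_sequentially by auto
  have "dist (c / (real n + 4)) 0 < r" if "n \<ge> N" for n
  proof -
    have p: "c / (real n + 4) > 0" using assms by simp
    have "dist (c / (real n + 4)) 0 = c / (real n + 4)"
      by (simp only: dist_real_def diff_0_right abs_of_pos[OF p])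
    then show ?thesis using N[OF that] r by linarith
  qed
  then show "\<exists>no. \<forall>n\<ge>no. dist (c / (real n + 4)) 0 < r" by blast
qed

lemma integral_restrict_Collect:
  "integral {x \<in> S. P x} h = integral S (\<lambda>x. if P x then h x else (0::real))"
proof -
  have "integral {x \<in> S. P x} h = integral UNIV (\<lambda>x. if x \<in> {x \<in> S. P x} then h x else 0)"
    by (rule integral_restrict_UNIV[symmetric])
  also have "(\<lambda>x. if x \<in> {x \<in> S. P x} then h x else 0) = (\<lambda>x. if x \<in> S then (if P x then h x else 0) else 0)"
    by auto
  also have "integral UNIV \<dots> = integral S (\<lambda>x. if P x then h x else (0::real))"
    by (rule integral_restrict_UNIV)
  finally show ?thesis .
qed

lemma integrable_restrict_Collect:
  "h integrable_on {x \<in> S. P x} \<longleftrightarrow> (\<lambda>x. if P x then h x else (0::real)) integrable_on S"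
proof -
  have "h integrable_on {x \<in> S. P x} \<longleftrightarrow> (\<lambda>x. if x \<in> {x \<in> S. P x} then h x else 0) integrable_on UNIV"
    by (rule integrable_restrict_UNIV[symmetric])
  also have "(\<lambda>x. if x \<in> {x \<in> S. P x} then h x else 0) = (\<lambda>x. if x \<in> S then (if P x then h x else 0) else 0)"
    by auto
  also have "\<dots> integrable_on UNIV \<longleftrightarrow> (\<lambda>x. if P x then h x else (0::real)) integrable_on S"
    by (rule integrable_restrict_UNIV)
  finally show ?thesis .
qed

locale psetting2 = psetting \<Omega> \<psi> f for \<Omega> :: "'a::euclidean_space set" and \<psi> f +
  fixes \<alpha> lam B :: real
  assumes lam: "lam > 0" and alpha: "\<alpha> < 0"
  and conn: "connected \<Omega>" and ne: "\<Omega> \<noteq> {}"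
  and fnn: "\<And>x. x \<in> \<Omega> \<Longrightarrow> 0 \<le> f x"
  and fpos: "\<And>x. x \<in> \<Omega> \<Longrightarrow> f x \<noteq> 0 \<Longrightarrow> \<alpha> + lam * \<psi> x > 0"
  and fint: "integral \<Omega> f = 1"
  and gbd: "\<And>b x. b \<in> Basis \<Longrightarrow> x \<in> \<Omega> \<Longrightarrow> \<bar>partial \<psi> b x\<bar> \<le> B"
begin

definition "cc = - \<alpha> / lam"

lemma cc_pos: "cc > 0" unfolding cc_def using lam alpha by (simp add: divide_neg_pos)

lemma u_iff: "\<alpha> + lam * s > 0 \<longleftrightarrow> s > cc" "\<alpha> + lam * s < 0 \<longleftrightarrow> s < cc" "\<alpha> + lam * s = 0 \<longleftrightarrow> s = cc"
  unfolding cc_def using lam by (auto simp: field_simps)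

lemma f_supp: "x \<in> \<Omega> \<Longrightarrow> f x \<noteq> 0 \<Longrightarrow> \<psi> x > cc"
  using fpos u_iff by blast

lemma f_integrable: "f integrable_on \<Omega>"
  using fint not_integrable_integral by fastforce

lemma grad_zero_of_sq: "(norm (grad \<psi> x))^2 = 0 \<Longrightarrow> grad \<psi> x = 0" by simp

lemma psi_neg_grad:
  assumes x: "x \<in> \<Omega>" "\<psi> x < 0"
  shows "grad \<psi> x = 0"
proof -
  define \<eta> where "\<eta> = - \<psi> x / 2"
  have eta: "\<eta> > 0" unfolding \<eta>_def using x by simp
  define K where "K s = (-1/2) * (max (- s - \<eta>) 0)^2" for s
  define K' where "K' s = max (- s - \<eta>) 0" for s
  have Kd: "(K has_real_derivative K' s) (at s)" for s
    unfolding K_def K'_def by (rule DERIV_cong[OF DERIV_cmult[OF dPn]]) simp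
  have Kc: "continuous_on UNIV K'" unfolding K'_def by (intro continuous_intros)
  have K0: "K s = 0" "K' s = 0" if "\<bar>s\<bar> \<le> \<eta>" for s using that unfolding K_def K'_def by auto
  note w = weak[OF Kd Kc eta K0(1) K0(2)]
  have fK: "f y * K (\<psi> y) = 0" if "y \<in> \<Omega>" for y
  proof (cases "f y = 0")
    case False
    then have "\<psi> y > cc" using f_supp that by blast
    then have "- \<psi> y - \<eta> \<le> 0" using cc_pos eta by linarith
    then show ?thesis unfolding K_def by simp
  qed simp
  have "integral \<Omega> (\<lambda>y. f y * K (\<psi> y)) = 0" using fK by (simp add: integral_cong[of \<Omega> _ "\<lambda>_. 0"])
  then have h0: "((\<lambda>y. K' (\<psi> y) * (norm (grad \<psi> y))^2) has_integral 0) \<Omega>"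
    using w(1) w(3) integrable_integral by fastforce
  have cont: "continuous_on \<Omega> (\<lambda>y. K' (\<psi> y) * (norm (grad \<psi> y))^2)"
  proof (intro continuous_on_mult cont_gradsq)
    show "continuous_on \<Omega> (\<lambda>y. K' (\<psi> y))" by (rule continuous_on_compose2[OF Kc cont_psi]) simp
  qed
  have "K' (\<psi> x) * (norm (grad \<psi> x))^2 = 0"
    by (rule zero_integral_nonneg[OF op cont _ h0 x(1)]) (simp add: K'_def)
  moreover have "K' (\<psi> x) > 0" unfolding K'_def \<eta>_def using x by simp
  ultimately show ?thesis by simp
qed

lemma psi_nonneg:
  assumes "x \<in> \<Omega>" shows "\<psi> x \<ge> 0"
proof (rule ccontr)
  assume "\<not> \<psi> x \<ge> 0"
  then have x0: "\<psi> x < 0" by simp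
  have cpt: "compact (closure \<Omega>)" using bounded_closure[OF bdd] by (simp add: compact_eq_bounded_closed)
  have cne: "closure \<Omega> \<noteq> {}" using ne by simp
  obtain x1 where x1: "x1 \<in> closure \<Omega>" "\<And>y. y \<in> closure \<Omega> \<Longrightarrow> \<psi> x1 \<le> \<psi> y"
    using continuous_attains_inf[OF cpt cne contcl] by blast
  define m where "m = \<psi> x1"
  have m0: "m < 0" using x1(2)[of x] assms closure_subset x0 unfolding m_def by force
  have x1O: "x1 \<in> \<Omega>"
  proof (rule ccontr)
    assume "x1 \<notin> \<Omega>"
    then have "x1 \<in> frontier \<Omega>" using x1(1) closure_Un_frontier by blast
    then show False using bc m0 unfolding m_def by simp
  qed
  define A where "A = {y \<in> \<Omega>. \<psi> y = m}"
  have Aopen: "open A"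
    unfolding open_contains_ball
  proof
    fix y assume yA: "y \<in> A"
    then have yO: "y \<in> \<Omega>" and ym: "\<psi> y = m" unfolding A_def by auto
    have "isCont \<psi> y" using cont_psi op yO continuous_on_eq_continuous_at by blast
    then obtain d where d: "d > 0" "\<And>z. dist z y < d \<Longrightarrow> dist (\<psi> z) (\<psi> y) < - m"
      using m0 unfolding continuous_at_eps_delta by (metis neg_0_less_iff_less)
    obtain e1 where e1: "e1 > 0" "ball y e1 \<subseteq> \<Omega>" using op yO open_contains_ball by blast
    define e where "e = min d e1"
    have e: "e > 0" "ball y e \<subseteq> \<Omega>" using d e1 unfolding e_def by auto
    have neg: "\<psi> z < 0" if "z \<in> ball y e" for z
    proof -
      have "dist z y < d" using that unfolding e_def by (simp add: dist_commute)
      then have "\<bar>\<psi> z - m\<bar> < - m" using d(2) ym by (simp add: dist_real_def)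
      then show ?thesis by linarith
    qed
    have "\<exists>k. \<forall>z\<in>ball y e. \<psi> z = k"
    proof (rule has_derivative_zero_constant)
      show "convex (ball y e)" by simp
      fix z assume z: "z \<in> ball y e"
      then have zO: "z \<in> \<Omega>" using e by blast
      have g0: "grad \<psi> z = 0" using psi_neg_grad[OF zO neg[OF z]] .
      have "(\<psi> has_derivative frechet_derivative \<psi> (at z)) (at z)"
        using dpsi[OF zO] frechet_derivative_works by blast
      moreover have "frechet_derivative \<psi> (at z) = (\<lambda>h. 0)"
        using frechet_grad[OF dpsi[OF zO]] g0 by (simp add: fun_eq_iff)
      ultimately show "(\<psi> has_derivative (\<lambda>h. 0)) (at z within ball y e)"
        by (simp add: has_derivative_at_withinI)
    qed
    then obtain k where k: "\<And>z. z \<in> ball y e \<Longrightarrow> \<psi> z = k" by blast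
    have "k = m" using k[of y] e ym by simp
    then have "ball y e \<subseteq> A" unfolding A_def using k e by auto
    then show "\<exists>e>0. ball y e \<subseteq> A" using e by blast
  qed
  have "openin (top_of_set \<Omega>) A" by (rule open_subset[OF _ Aopen]) (auto simp: A_def)
  moreover have "closedin (top_of_set \<Omega>) A"
    unfolding A_def by (rule continuous_closedin_preimage_constant[OF cont_psi])
  ultimately have "A = {} \<or> A = \<Omega>" using conn connected_clopen by blast
  moreover have "x1 \<in> A" unfolding A_def m_def using x1O by simp
  ultimately have AO: "A = \<Omega>" by blast
  have "closure \<Omega> \<subseteq> {y \<in> closure \<Omega>. \<psi> y = m}"
  proof (rule closure_minimal)
    show "\<Omega> \<subseteq> {y \<in> closure \<Omega>. \<psi> y = m}" using AO closure_subset unfolding A_def by blast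
    show "closed {y \<in> closure \<Omega>. \<psi> y = m}"
      by (rule continuous_closed_preimage_constant[OF contcl]) simp
  qed
  moreover have "\<Omega> \<noteq> UNIV" using bdd not_bounded_UNIV by metis
  then obtain y where y: "y \<in> frontier \<Omega>" using frontier_not_empty[OF ne] by blast
  moreover have "y \<in> closure \<Omega>" using y unfolding frontier_def by blast
  ultimately have "\<psi> y = m" by blast
  then show False using bc[OF y] m0 by simp
qed

lemma grad_zero_nonpos:
  assumes x: "x \<in> \<Omega>" "\<psi> x \<le> 0"
  shows "grad \<psi> x = 0"
proof -
  have px: "\<psi> x = 0" using psi_nonneg[OF x(1)] x(2) by simp
  have "frechet_derivative \<psi> (at x) = (\<lambda>v. 0)"
  proof (rule differential_zero_maxmin[OF x(1) op])
    show "(\<psi> has_derivative frechet_derivative \<psi> (at x)) (at x)"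
      using dpsi[OF x(1)] frechet_derivative_works by blast
    show "(\<forall>y\<in>\<Omega>. \<psi> y \<le> \<psi> x) \<or> (\<forall>y\<in>\<Omega>. \<psi> x \<le> \<psi> y)"
      using psi_nonneg px by auto
  qed
  then have "partial \<psi> b x = 0" for b unfolding partial_def by simp
  then show ?thesis unfolding grad_def by simp
qed

lemma H_integrable: "(\<lambda>x. (norm (grad \<psi> x))^2) integrable_on \<Omega>"
proof (rule measurable_bounded_by_integrable_imp_integrable_real)
  have lm: "\<Omega> \<in> lmeasurable" using lmeasurable_open[OF bdd op] .
  show "\<Omega> \<in> sets lebesgue" using fmeasurableD[OF lm] .
  show "(\<lambda>x. (norm (grad \<psi> x))^2) \<in> borel_measurable (lebesgue_on \<Omega>)"
    by (rule continuous_imp_measurable_on_sets_lebesgue[OF cont_gradsq]) (rule fmeasurableD[OF lm])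
  show "(\<lambda>x. real DIM('a) * B^2) integrable_on \<Omega>" using integrable_on_const[OF lm] .
  fix x assume x: "x \<in> \<Omega>"
  have "(\<Sum>b\<in>Basis. (partial \<psi> b x)^2) \<le> (\<Sum>b\<in>(Basis::'a set). B^2)"
  proof (rule sum_mono)
    fix b :: 'a assume b: "b \<in> Basis"
    have "\<bar>partial \<psi> b x\<bar>^2 \<le> B^2"
      using gbd[OF b x] by (intro power_mono) auto
    then show "(partial \<psi> b x)^2 \<le> B^2" by simp
  qed
  moreover have "0 \<le> (\<Sum>b\<in>(Basis::'a set). (partial \<psi> b x)^2)" by (simp add: sum_nonneg)
  ultimately show "\<bar>(norm (grad \<psi> x))^2\<bar> \<le> real DIM('a) * B^2" by (simp add: norm_grad_sq)
qed

end


lemma e_facts: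
  fixes c :: real assumes "c > 0"
  shows "c / (real n + 4) > 0" "c / (real n + 4) \<le> c / 4"
proof -
  show "c / (real n + 4) > 0" using assms by simp
  show "c / (real n + 4) \<le> c / 4" using assms by (intro divide_left_mono) auto
qed

lemma div2: "(2*a - 2*b - 2*c + 2*d) / (2*e) = (a - b - c + d) / (e::real)"
  by (cases "e = 0") (simp_all add: field_simps)

context psetting2 begin

lemma neg_part:
  "(\<lambda>x. if \<psi> x < cc then (norm (grad \<psi> x))^2 else 0) integrable_on \<Omega> \<and>
   integral \<Omega> (\<lambda>x. if \<psi> x < cc then (norm (grad \<psi> x))^2 else 0) = cc"
proof -
  define H where "H x = (norm (grad \<psi> x))^2" for x
  define e where "e n = cc / (real n + 4)" for n
  have ep: "e n > 0" "e n \<le> cc / 4" for n unfolding e_def using e_facts[OF cc_pos] by auto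
  define K where "K n s = ((max (s - e n) 0)^2 - (max (s - 2 * e n) 0)^2 - (max (s - (cc - e n)) 0)^2
      + (max (s - cc) 0)^2) / (2 * e n)" for n s
  define K' where "K' n s = (max (s - e n) 0 - max (s - 2 * e n) 0 - max (s - (cc - e n)) 0
      + max (s - cc) 0) / e n" for n s
  have Kd: "(K n has_real_derivative K' n s) (at s)" for n s
  proof -
    have "((\<lambda>s. (max (s - e n) 0)^2 - (max (s - 2 * e n) 0)^2 - (max (s - (cc - e n)) 0)^2
      + (max (s - cc) 0)^2) has_real_derivative
      (2 * max (s - e n) 0 - 2 * max (s - 2 * e n) 0 - 2 * max (s - (cc - e n)) 0 + 2 * max (s - cc) 0)) (at s)"
      by (intro DERIV_add DERIV_diff dPs)
    from DERIV_cdivide[OF this, of "2 * e n"] show ?thesis unfolding K_def[abs_def] K'_def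
    proof (rule DERIV_cong)
      have "(2 * max (s - e n) 0 - 2 * max (s - 2 * e n) 0 - 2 * max (s - (cc - e n)) 0 + 2 * max (s - cc) 0)
          = 2 * (max (s - e n) 0 - max (s - 2 * e n) 0 - max (s - (cc - e n)) 0 + max (s - cc) 0)" by simp
      note eq2 = this
      show "(2 * max (s - e n) 0 - 2 * max (s - 2 * e n) 0 - 2 * max (s - (cc - e n)) 0 + 2 * max (s - cc) 0) / (2 * e n)
          = (max (s - e n) 0 - max (s - 2 * e n) 0 - max (s - (cc - e n)) 0 + max (s - cc) 0) / e n"
        by (rule div2)
    qed
  qed
  have Kc: "continuous_on UNIV (K' n)" for n unfolding K'_def[abs_def] using ep(1)[of n] by (intro continuous_intros) auto
  have K0: "K n s = 0" "K' n s = 0" if "\<bar>s\<bar> \<le> e n" for n s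
  proof -
    have "s - e n \<le> 0" "s - 2 * e n \<le> 0" "s - (cc - e n) \<le> 0" "s - cc \<le> 0"
      using that ep[of n] by auto
    then show "K n s = 0" "K' n s = 0" unfolding K_def K'_def by (simp_all add: max_absorb2)
  qed
  have w: "(\<lambda>x. K' n (\<psi> x) * H x) integrable_on \<Omega>"
    "(\<lambda>x. f x * K n (\<psi> x)) integrable_on \<Omega>"
    "integral \<Omega> (\<lambda>x. K' n (\<psi> x) * H x) = integral \<Omega> (\<lambda>x. f x * K n (\<psi> x))" for n
    using weak[OF Kd Kc ep(1) K0(1) K0(2)] unfolding H_def by auto
  have fK: "f x * K n (\<psi> x) = (cc - 2 * e n) * f x" if x: "x \<in> \<Omega>" for n x
  proof (cases "f x = 0")
    case False
    define s where "s = \<psi> x"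
    have s: "s > cc" using f_supp[OF x False] unfolding s_def .
    have m: "max (s - e n) 0 = s - e n" "max (s - 2 * e n) 0 = s - 2 * e n"
      "max (s - (cc - e n)) 0 = s - (cc - e n)" "max (s - cc) 0 = s - cc"
      using s ep[of n] cc_pos by (auto intro!: max_absorb1)
    have num: "(s - e n)^2 - (s - 2 * e n)^2 - (s - (cc - e n))^2 + (s - cc)^2 = (2 * e n) * (cc - 2 * e n)"
      by algebra
    have "K n s = cc - 2 * e n" unfolding K_def m num using ep(1)[of n] by simp
    then show ?thesis unfolding s_def by simp
  qed simp
  have intn: "integral \<Omega> (\<lambda>x. K' n (\<psi> x) * H x) = cc - 2 * e n" for n
  proof -
    have "integral \<Omega> (\<lambda>x. f x * K n (\<psi> x)) = integral \<Omega> (\<lambda>x. (cc - 2 * e n) * f x)"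
      by (rule integral_cong) (rule fK)
    also have "\<dots> = (cc - 2 * e n) * integral \<Omega> f" by (rule integral_mult_right)
    finally show ?thesis using w(3)[of n] fint by simp
  qed
  define g where "g x = (if 0 < \<psi> x \<and> \<psi> x < cc then H x else 0)" for x
  have Hnn: "0 \<le> H x" for x unfolding H_def by simp
  have K'bd: "\<bar>K' n s\<bar> \<le> 1" for n s
  proof -
    have A: "0 \<le> max (s - e n) 0 - max (s - 2 * e n) 0 \<and> max (s - e n) 0 - max (s - 2 * e n) 0 \<le> e n"
      using clamp_bd[of "e n" "s - e n"] ep[of n] by (simp add: algebra_simps)
    have B: "0 \<le> max (s - (cc - e n)) 0 - max (s - cc) 0 \<and> max (s - (cc - e n)) 0 - max (s - cc) 0 \<le> e n"
      using clamp_bd[of "e n" "s - (cc - e n)"] ep[of n] by (simp add: algebra_simps)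
    have "\<bar>max (s - e n) 0 - max (s - 2 * e n) 0 - max (s - (cc - e n)) 0 + max (s - cc) 0\<bar> \<le> e n"
      using A B by linarith
    then show ?thesis unfolding K'_def using ep(1)[of n] by (simp add: abs_divide divide_le_eq)
  qed
  have bound: "norm (K' n (\<psi> x) * H x) \<le> H x" if "x \<in> \<Omega>" for n x
  proof -
    have "\<bar>K' n (\<psi> x)\<bar> * H x \<le> 1 * H x" using K'bd Hnn by (intro mult_right_mono) auto
    then show ?thesis using Hnn by (simp add: abs_mult)
  qed
  have conv: "(\<lambda>n. K' n (\<psi> x) * H x) \<longlonglongrightarrow> g x" if x: "x \<in> \<Omega>" for x
  proof (rule tendsto_eventually)
    define s where "s = \<psi> x"
    show "\<forall>\<^sub>F n in sequentially. K' n (\<psi> x) * H x = g x"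
    proof (cases "s \<le> 0")
      case True
      have "K' n s = 0" for n
      proof -
        have "s - e n \<le> 0" "s - 2 * e n \<le> 0" "s - (cc - e n) \<le> 0" "s - cc \<le> 0"
          using True ep[of n] cc_pos by auto
        then show ?thesis unfolding K'_def by (simp add: max_absorb2)
      qed
      then show ?thesis using True unfolding g_def s_def by simp
    next
      case F1: False
      show ?thesis
      proof (cases "s \<ge> cc")
        case True
        have "K' n s = 0" for n
        proof -
          have "max (s - e n) 0 = s - e n" "max (s - 2 * e n) 0 = s - 2 * e n"
            "max (s - (cc - e n)) 0 = s - (cc - e n)" "max (s - cc) 0 = s - cc"
            using True ep[of n] cc_pos by (auto intro!: max_absorb1)
          then show ?thesis unfolding K'_def by simp
        qed
        then show ?thesis using True unfolding g_def s_def by simp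
      next
        case False
        have d: "min (s / 2) (cc - s) > 0" using F1 False by simp
        have "eventually (\<lambda>n. e n \<le> min (s / 2) (cc - s)) sequentially"
          unfolding e_def by (rule ev_small[OF cc_pos d])
        then show ?thesis
        proof (rule eventually_mono)
          fix n assume n: "e n \<le> min (s / 2) (cc - s)"
          have "max (s - e n) 0 = s - e n" "max (s - 2 * e n) 0 = s - 2 * e n"
            using n ep[of n] by (auto intro!: max_absorb1)
          moreover have "max (s - (cc - e n)) 0 = 0" "max (s - cc) 0 = 0"
            using n False by (auto intro!: max_absorb2)
          ultimately have "K' n s = 1" unfolding K'_def using ep(1)[of n] by simp
          then show "K' n (\<psi> x) * H x = g x" using F1 False unfolding g_def s_def by simp
        qed
      qed
    qed
  qed
  have Hi: "H integrable_on \<Omega>" using H_integrable unfolding H_def[abs_def] .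
  have gi: "g integrable_on \<Omega>"
    by (rule dominated_convergence(1)[OF w(1) Hi bound conv])
  have lim1: "(\<lambda>n. integral \<Omega> (\<lambda>x. K' n (\<psi> x) * H x)) \<longlonglongrightarrow> integral \<Omega> g"
    by (rule dominated_convergence(2)[OF w(1) Hi bound conv])
  have "(\<lambda>n. cc - 2 * e n) \<longlonglongrightarrow> cc - 2 * 0"
    unfolding e_def by (intro tendsto_intros eps_lim[OF cc_pos])
  then have lim2: "(\<lambda>n. integral \<Omega> (\<lambda>x. K' n (\<psi> x) * H x)) \<longlonglongrightarrow> cc" unfolding intn by simp
  have gint: "integral \<Omega> g = cc" using LIMSEQ_unique[OF lim1 lim2] .
  have eq: "(if \<psi> x < cc then H x else 0) = g x" if "x \<in> \<Omega>" for x
    using grad_zero_nonpos[OF that] unfolding g_def H_def by (cases "\<psi> x \<le> 0") auto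
  show ?thesis unfolding H_def[symmetric]
    using gi gint integrable_cong[of \<Omega> "\<lambda>x. if \<psi> x < cc then H x else 0" g] integral_cong[of \<Omega> "\<lambda>x. if \<psi> x < cc then H x else 0" g] eq
    by auto
qed

end


lemma div3: "(2*a - 2*(2*b) + 2*c) / (2*e^2) = (a - 2*b + c) / ((e::real)^2)"
  by (cases "e = 0") (simp_all add: field_simps)

lemma tent_bd: "(e::real) > 0 \<Longrightarrow> 0 \<le> max (s - (c - e)) 0 - 2 * max (s - c) 0 + max (s - (c + e)) 0
   \<and> max (s - (c - e)) 0 - 2 * max (s - c) 0 + max (s - (c + e)) 0 \<le> e"
  by (auto simp: max_def)

context psetting2 begin

lemma zero_part:
  "(\<lambda>x. if \<psi> x = cc then (norm (grad \<psi> x))^2 else 0) integrable_on \<Omega> \<and>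
   integral \<Omega> (\<lambda>x. if \<psi> x = cc then (norm (grad \<psi> x))^2 else 0) = 0"
proof -
  define H where "H x = (norm (grad \<psi> x))^2" for x
  define e where "e n = cc / (real n + 4)" for n
  have ep: "e n > 0" "e n \<le> cc / 4" for n unfolding e_def using e_facts[OF cc_pos] by auto
  define T where "T n s = max (s - (cc - e n)) 0 - 2 * max (s - cc) 0 + max (s - (cc + e n)) 0" for n s
  have Tb: "0 \<le> T n s" "T n s \<le> e n" for n s unfolding T_def using tent_bd[OF ep(1)[of n]] by auto
  define K where "K n s = ((max (s - (cc - e n)) 0)^2 - 2 * (max (s - cc) 0)^2
      + (max (s - (cc + e n)) 0)^2) / (2 * (e n)^2)" for n s
  define K' where "K' n s = T n s / (e n)^2" for n s
  have Kd: "(K n has_real_derivative K' n s) (at s)" for n s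
  proof -
    have "((\<lambda>s. (max (s - (cc - e n)) 0)^2 - 2 * (max (s - cc) 0)^2 + (max (s - (cc + e n)) 0)^2)
      has_real_derivative
      (2 * max (s - (cc - e n)) 0 - 2 * (2 * max (s - cc) 0) + 2 * max (s - (cc + e n)) 0)) (at s)"
      by (intro DERIV_add DERIV_diff DERIV_cmult dPs)
    from DERIV_cdivide[OF this, of "2 * (e n)^2"] show ?thesis unfolding K_def[abs_def] K'_def T_def
      by (rule DERIV_cong) (rule div3)
  qed
  have Kc: "continuous_on UNIV (K' n)" for n unfolding K'_def[abs_def] T_def using ep(1)[of n]
    by (intro continuous_intros) auto
  have cc2: "cc / 2 > 0" using cc_pos by simp
  have K0: "K n s = 0" "K' n s = 0" if "\<bar>s\<bar> \<le> cc / 2" for n s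
  proof -
    have "s - (cc - e n) \<le> 0" "s - cc \<le> 0" "s - (cc + e n) \<le> 0"
      using that ep[of n] cc_pos by auto
    then show "K n s = 0" "K' n s = 0" unfolding K_def K'_def T_def by (simp_all add: max_absorb2)
  qed
  have w: "(\<lambda>x. K' n (\<psi> x) * H x) integrable_on \<Omega>"
    "(\<lambda>x. f x * K n (\<psi> x)) integrable_on \<Omega>"
    "integral \<Omega> (\<lambda>x. K' n (\<psi> x) * H x) = integral \<Omega> (\<lambda>x. f x * K n (\<psi> x))" for n
    using weak[OF Kd Kc cc2 K0(1) K0(2)] unfolding H_def by auto
  have fK: "f x * K n (\<psi> x) \<le> f x" if x: "x \<in> \<Omega>" for n x
  proof (cases "f x = 0")
    case False
    define s where "s = \<psi> x"
    define t where "t = s - cc"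
    have s: "s > cc" using f_supp[OF x False] unfolding s_def .
    have en: "e n > 0" using ep by simp
    have m: "max (s - (cc - e n)) 0 = t + e n" "max (s - cc) 0 = t"
      using s ep[of n] cc_pos unfolding t_def by (auto intro!: max_absorb1)
    have "(max (s - (cc - e n)) 0)^2 - 2 * (max (s - cc) 0)^2 + (max (s - (cc + e n)) 0)^2 \<le> 2 * (e n)^2"
    proof (cases "t \<ge> e n")
      case True
      then have "max (s - (cc + e n)) 0 = t - e n" unfolding t_def by (auto intro!: max_absorb1)
      moreover have "(t + e n)^2 - 2 * t^2 + (t - e n)^2 = 2 * (e n)^2" by algebra
      ultimately show ?thesis unfolding m by simp
    next
      case False
      then have "max (s - (cc + e n)) 0 = 0" unfolding t_def by (auto intro!: max_absorb2)
      moreover have "2 * (e n)^2 - ((t + e n)^2 - 2 * t^2 + 0^2) = (e n - t)^2"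
        by (simp add: power2_eq_square algebra_simps)
      moreover have "(e n - t)^2 \<ge> 0" by simp
      ultimately show ?thesis unfolding m by linarith
    qed
    then have "K n s \<le> 1" unfolding K_def using en by (simp add: divide_le_eq)
    then have "f x * K n s \<le> f x * 1" using fnn[OF x] by (intro mult_left_mono) auto
    then show ?thesis unfolding s_def by simp
  qed simp
  have intle: "integral \<Omega> (\<lambda>x. K' n (\<psi> x) * H x) \<le> 1" for n
  proof -
    have "integral \<Omega> (\<lambda>x. f x * K n (\<psi> x)) \<le> integral \<Omega> f"
      by (rule integral_le[OF w(2) f_integrable fK])
    then show ?thesis using w(3)[of n] fint by simp
  qed
  have Hnn: "0 \<le> H x" for x unfolding H_def by simp
  define h where "h n x = e n * (K' n (\<psi> x) * H x)" for n x
  have hform: "h n x = (T n (\<psi> x) / e n) * H x" for n x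
    unfolding h_def K'_def using ep(1)[of n] by (simp add: power2_eq_square field_simps)
  have hi: "((h n) has_integral (e n * integral \<Omega> (\<lambda>x. K' n (\<psi> x) * H x))) \<Omega>" for n
    unfolding h_def[abs_def] by (rule has_integral_mult_right[OF integrable_integral[OF w(1)]])
  have hint: "integral \<Omega> (h n) = e n * integral \<Omega> (\<lambda>x. K' n (\<psi> x) * H x)" for n
    using hi integral_unique by blast
  have hii: "h n integrable_on \<Omega>" for n using hi by blast
  have tfrac: "0 \<le> T n s / e n" "T n s / e n \<le> 1" for n s
    using Tb[of n s] ep(1)[of n] by (auto simp: divide_le_eq)
  have hnn: "0 \<le> h n x" for n x unfolding hform by (rule mult_nonneg_nonneg[OF tfrac(1) Hnn])
  have bound: "norm (h n x) \<le> H x" if "x \<in> \<Omega>" for n x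
  proof -
    have "(T n (\<psi> x) / e n) * H x \<le> 1 * H x" using tfrac Hnn by (intro mult_right_mono) auto
    then show ?thesis using hnn[of n x] unfolding hform by simp
  qed
  define g where "g x = (if \<psi> x = cc then H x else 0)" for x
  have conv: "(\<lambda>n. h n x) \<longlonglongrightarrow> g x" if x: "x \<in> \<Omega>" for x
  proof (rule tendsto_eventually)
    define s where "s = \<psi> x"
    show "\<forall>\<^sub>F n in sequentially. h n x = g x"
    proof (cases "s = cc")
      case True
      have "T n s = e n" for n unfolding T_def using True ep[of n] by (simp add: max_def)
      then have "h n x = H x" for n unfolding hform s_def[symmetric] using ep(1)[of n] by simp
      then show ?thesis using True unfolding g_def s_def by simp
    next
      case False
      have d: "\<bar>s - cc\<bar> > 0" using False by simp
      have "eventually (\<lambda>n. e n \<le> \<bar>s - cc\<bar>) sequentially"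
        unfolding e_def by (rule ev_small[OF cc_pos d])
      then show ?thesis
      proof (rule eventually_mono)
        fix n assume n: "e n \<le> \<bar>s - cc\<bar>"
        have "T n s = 0" unfolding T_def using n ep(1)[of n] by (auto simp: max_def abs_if split: if_splits)
        then show "h n x = g x" unfolding hform g_def s_def[symmetric] using False by simp
      qed
    qed
  qed
  have Hi: "H integrable_on \<Omega>" using H_integrable unfolding H_def[abs_def] .
  have gi: "g integrable_on \<Omega>"
    by (rule dominated_convergence(1)[OF hii Hi bound conv])
  have lim1: "(\<lambda>n. integral \<Omega> (h n)) \<longlonglongrightarrow> integral \<Omega> g"
    by (rule dominated_convergence(2)[OF hii Hi bound conv])
  have lim2: "(\<lambda>n. integral \<Omega> (h n)) \<longlonglongrightarrow> 0"
  proof (rule tendsto_sandwich[of "\<lambda>n. 0" _ _ "\<lambda>n. e n"])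
    show "\<forall>\<^sub>F n in sequentially. 0 \<le> integral \<Omega> (h n)"
      using integral_nonneg[OF hii hnn] by simp
    show "\<forall>\<^sub>F n in sequentially. integral \<Omega> (h n) \<le> e n"
    proof (intro always_eventually allI)
      fix n
      have "e n * integral \<Omega> (\<lambda>x. K' n (\<psi> x) * H x) \<le> e n * 1"
        using intle ep(1)[of n] by (intro mult_left_mono) auto
      then show "integral \<Omega> (h n) \<le> e n" unfolding hint by simp
    qed
    show "(\<lambda>n. 0) \<longlonglongrightarrow> (0::real)" by simp
    show "e \<longlonglongrightarrow> 0" unfolding e_def[abs_def] by (rule eps_lim[OF cc_pos])
  qed
  have gint: "integral \<Omega> g = 0" using LIMSEQ_unique[OF lim1 lim2] .
  show ?thesis using gi gint unfolding g_def H_def by simp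
qed

lemma main_concl:
  "2 * ((1/2) * integral \<Omega> (\<lambda>x. (norm (grad \<psi> x))\<^sup>2))
           = integral {x\<in>\<Omega>. \<alpha> + lam * \<psi> x > 0} (\<lambda>x. (norm (grad \<psi> x))\<^sup>2) - \<alpha> / lam
    \<and> integral {x\<in>\<Omega>. \<alpha> + lam * \<psi> x < 0} (\<lambda>x. (norm (grad \<psi> x))\<^sup>2) = - \<alpha> / lam
    \<and> integral {x\<in>\<Omega>. \<alpha> + lam * \<psi> x = 0} (\<lambda>x. (norm (grad \<psi> x))\<^sup>2) = 0"
proof -
  define H where "H x = (norm (grad \<psi> x))^2" for x
  define Hn where "Hn x = (if \<psi> x < cc then H x else 0)" for x
  define Hz where "Hz x = (if \<psi> x = cc then H x else 0)" for x
  define Hp where "Hp x = (if \<psi> x > cc then H x else 0)" for x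
  have Hi: "H integrable_on \<Omega>" using H_integrable unfolding H_def[abs_def] .
  have Hni: "Hn integrable_on \<Omega>" and Hnint: "integral \<Omega> Hn = cc"
    using neg_part unfolding Hn_def H_def by auto
  have Hzi: "Hz integrable_on \<Omega>" and Hzint: "integral \<Omega> Hz = 0"
    using zero_part unfolding Hz_def H_def by auto
  have Hpeq: "Hp x = (H x - Hn x) - Hz x" for x unfolding Hp_def Hn_def Hz_def by auto
  have i1: "(\<lambda>x. H x - Hn x) integrable_on \<Omega>" using integrable_diff[OF Hi Hni] .
  have "integral \<Omega> Hp = integral \<Omega> (\<lambda>x. (H x - Hn x) - Hz x)" unfolding Hpeq ..
  also have "\<dots> = integral \<Omega> (\<lambda>x. H x - Hn x) - integral \<Omega> Hz" by (rule integral_diff[OF i1 Hzi])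
  also have "\<dots> = integral \<Omega> H - cc" using integral_diff[OF Hi Hni] Hnint Hzint by simp
  finally have Hpint: "integral \<Omega> Hp = integral \<Omega> H - cc" .
  have setp: "integral {x\<in>\<Omega>. \<alpha> + lam * \<psi> x > 0} H = integral \<Omega> Hp"
    unfolding integral_restrict_Collect Hp_def u_iff ..
  have setn: "integral {x\<in>\<Omega>. \<alpha> + lam * \<psi> x < 0} H = integral \<Omega> Hn"
    unfolding integral_restrict_Collect Hn_def u_iff ..
  have setz: "integral {x\<in>\<Omega>. \<alpha> + lam * \<psi> x = 0} H = integral \<Omega> Hz"
    unfolding integral_restrict_Collect Hz_def u_iff ..
  have ccv: "- \<alpha> / lam = cc" unfolding cc_def ..
  show ?thesis unfolding H_def[symmetric] setp setn setz Hpint Hnint Hzint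
    using ccv by simp
qed

end


lemma holder_cont:
  assumes b: "\<beta> > 0" and h: "holder_on \<beta> S g"
  shows "continuous_on S g"
proof -
  obtain C where C: "\<And>x y. x \<in> S \<Longrightarrow> y \<in> S \<Longrightarrow> \<bar>g x - g y\<bar> \<le> C * dist x y powr \<beta>"
    using h unfolding holder_on_def by blast
  define C' where "C' = max C 1"
  have C'p: "C' > 0" "C \<le> C'" unfolding C'_def by auto
  show ?thesis unfolding continuous_on_iff
  proof (intro ballI allI impI)
    fix x e assume x: "x \<in> S" and e: "(e::real) > 0"
    define d where "d = (e / C') powr (1 / \<beta>)"
    have ec: "e / C' > 0" using e C'p by simp
    have ecn: "e / C' \<noteq> 0" using ec by linarith
    have d: "d > 0" unfolding d_def powr_gt_zero by (rule ecn)
    have dp: "d powr \<beta> = e / C'"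
      unfolding d_def powr_powr using b ec e C'p by simp
    have "\<forall>x'\<in>S. dist x' x < d \<longrightarrow> dist (g x') (g x) < e"
    proof (intro ballI impI)
      fix x' assume x': "x' \<in> S" and dx: "dist x' x < d"
      have "dist x' x powr \<beta> < d powr \<beta>" by (rule powr_less_mono2[OF b _ dx]) simp
      then have lt: "dist x' x powr \<beta> < e / C'" using dp by simp
      have "\<bar>g x' - g x\<bar> \<le> C * dist x' x powr \<beta>" using C[OF x' x] .
      also have "\<dots> \<le> C' * dist x' x powr \<beta>" using C'p by (intro mult_right_mono) auto
      also have "\<dots> < C' * (e / C')" using lt C'p by (intro mult_strict_left_mono) auto
      also have "\<dots> = e" using C'p by simp
      finally show "dist (g x') (g x) < e" by (simp add: dist_real_def)
    qed
    then show "\<exists>d>0. \<forall>x'\<in>S. dist x' x < d \<longrightarrow> dist (g x') (g x) < e" using d by blast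
  qed
qed

lemma uc_bounded:
  fixes g :: "'a::euclidean_space \<Rightarrow> real"
  assumes "uniformly_continuous_on S g" "bounded S"
  shows "\<exists>B. \<forall>x\<in>S. \<bar>g x\<bar> \<le> B"
proof -
  obtain g' where g': "uniformly_continuous_on (closure S) g'" "\<And>x. x \<in> S \<Longrightarrow> g x = g' x"
    using uniformly_continuous_on_extension_on_closure[OF assms(1)] by metis
  have "compact (g' ` closure S)"
    using compact_continuous_image[OF uniformly_continuous_imp_continuous[OF g'(1)]]
      bounded_closure[OF assms(2)] by (simp add: compact_eq_bounded_closed)
  then obtain B where B: "\<forall>y\<in>g' ` closure S. norm y \<le> B"
    using compact_imp_bounded bounded_iff by metis
  have "\<forall>x\<in>S. \<bar>g x\<bar> \<le> B"
  proof
    fix x assume x: "x \<in> S"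
    then have "g' x \<in> g' ` closure S" using closure_subset by blast
    then show "\<bar>g x\<bar> \<le> B" using B g'(2)[OF x] by auto
  qed
  then show ?thesis by blast
qed

theorem lemma2p1:
  fixes \<Omega> :: "'a::euclidean_space set" and \<beta> p lam \<alpha> :: real and \<psi> :: "'a \<Rightarrow> real"
  assumes "0 < \<beta>" "\<beta> < 1"
    and "C2beta_domain \<beta> \<Omega>"
    and "p \<ge> 1" "lam > 0"
    and "solves_P \<beta> p \<Omega> lam \<alpha> \<psi>"
    and "\<alpha> < 0"
  shows "2 * ((1/2) * integral \<Omega> (\<lambda>x. (norm (grad \<psi> x))\<^sup>2))
           = integral {x\<in>\<Omega>. \<alpha> + lam * \<psi> x > 0} (\<lambda>x. (norm (grad \<psi> x))\<^sup>2) - \<alpha> / lam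
    \<and> integral {x\<in>\<Omega>. \<alpha> + lam * \<psi> x < 0} (\<lambda>x. (norm (grad \<psi> x))\<^sup>2) = - \<alpha> / lam
    \<and> integral {x\<in>\<Omega>. \<alpha> + lam * \<psi> x = 0} (\<lambda>x. (norm (grad \<psi> x))\<^sup>2) = 0"
proof -
  define F where "F x = (max (\<alpha> + lam * \<psi> x) 0) powr p" for x
  have dom: "open \<Omega>" "connected \<Omega>" "\<Omega> \<noteq> {}" "bounded \<Omega>"
    using assms(3) unfolding C2beta_domain_def by auto
  have sol: "C2beta_closure \<beta> \<Omega> \<psi>" "\<And>x. x \<in> \<Omega> \<Longrightarrow> - laplacian \<psi> x = F x"
    "\<And>x. x \<in> frontier \<Omega> \<Longrightarrow> \<psi> x = 0" "integral \<Omega> F = 1"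
    using assms(6) unfolding solves_P_def F_def by auto
  have cl: "C2beta_on \<beta> \<Omega> \<psi>" "continuous_on (closure \<Omega>) \<psi>"
    "\<And>b. b \<in> Basis \<Longrightarrow> uniformly_continuous_on \<Omega> (partial \<psi> b)"
    using sol(1) unfolding C2beta_closure_def by auto
  have c2o: "\<And>x. x \<in> \<Omega> \<Longrightarrow> \<psi> differentiable (at x)"
    "\<And>b x. b \<in> Basis \<Longrightarrow> x \<in> \<Omega> \<Longrightarrow> partial \<psi> b differentiable (at x)"
    "\<And>b c. b \<in> Basis \<Longrightarrow> c \<in> Basis \<Longrightarrow> holder_on \<beta> \<Omega> (partial (partial \<psi> b) c)"
    using cl(1) unfolding C2beta_on_def by auto
  have "\<forall>b\<in>Basis. \<exists>B. \<forall>x\<in>\<Omega>. \<bar>partial \<psi> b x\<bar> \<le> B"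
    using uc_bounded[OF cl(3) dom(4)] by blast
  then obtain Bf where Bf: "\<And>b x. b \<in> Basis \<Longrightarrow> x \<in> \<Omega> \<Longrightarrow> \<bar>partial \<psi> b x\<bar> \<le> Bf b"
    using bchoice[of Basis "\<lambda>b B. \<forall>x\<in>\<Omega>. \<bar>partial \<psi> b x\<bar> \<le> B"] by blast
  define B where "B = (\<Sum>b\<in>(Basis::'a set). Bf b)"
  obtain x0 where x0: "x0 \<in> \<Omega>" using dom(3) by blast
  have Bfnn: "0 \<le> Bf b" if "b \<in> Basis" for b using Bf[OF that x0] by linarith
  have gbd: "\<bar>partial \<psi> b x\<bar> \<le> B" if "b \<in> Basis" "x \<in> \<Omega>" for b x
  proof -
    have "Bf b \<le> B" unfolding B_def
      by (rule member_le_sum[OF that(1)]) (use Bfnn in auto)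
    then show ?thesis using Bf[OF that] by linarith
  qed
  have loc: "psetting2 \<Omega> \<psi> F \<alpha> lam B"
  proof (intro psetting2.intro psetting.intro psetting2_axioms.intro)
    show "open \<Omega>" by (rule dom(1))
    show "bounded \<Omega>" by (rule dom(4))
    show "\<And>x. x \<in> \<Omega> \<Longrightarrow> \<psi> differentiable (at x)" by (rule c2o(1))
    show "\<And>b x. b \<in> Basis \<Longrightarrow> x \<in> \<Omega> \<Longrightarrow> partial \<psi> b differentiable (at x)" by (rule c2o(2))
    show "\<And>b. b \<in> Basis \<Longrightarrow> continuous_on \<Omega> (partial (partial \<psi> b) b)"
      by (rule holder_cont[OF assms(1) c2o(3)])
    show "continuous_on (closure \<Omega>) \<psi>" by (rule cl(2))
    show "\<And>x. x \<in> frontier \<Omega> \<Longrightarrow> \<psi> x = 0" by (rule sol(3))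
    show "\<And>x. x \<in> \<Omega> \<Longrightarrow> - laplacian \<psi> x = F x" by (rule sol(2))
    show "lam > 0" by (rule assms(5))
    show "\<alpha> < 0" by (rule assms(7))
    show "connected \<Omega>" by (rule dom(2))
    show "\<Omega> \<noteq> {}" by (rule dom(3))
    show "\<And>x. x \<in> \<Omega> \<Longrightarrow> 0 \<le> F x" unfolding F_def by simp
    show "\<And>x. x \<in> \<Omega> \<Longrightarrow> F x \<noteq> 0 \<Longrightarrow> \<alpha> + lam * \<psi> x > 0"
    proof -
      fix x assume "F x \<noteq> 0"
      then have "max (\<alpha> + lam * \<psi> x) 0 \<noteq> 0" unfolding F_def by auto
      then show "\<alpha> + lam * \<psi> x > 0" by (simp add: max_def split: if_splits)
    qed
    show "integral \<Omega> F = 1" by (rule sol(4))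
    show "\<And>b x. b \<in> Basis \<Longrightarrow> x \<in> \<Omega> \<Longrightarrow> \<bar>partial \<psi> b x\<bar> \<le> B" by (rule gbd)
  qed
  show ?thesis by (rule psetting2.main_concl[OF loc])
qed


end
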